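(* For every Hopfian group $G$, $SC(G)=C(G)-1$.
   Context: In the category of groups, $X\leqslant^d G$ means there are homomorphisms $f:X\to G$, $g:G\to X$ with $g\circ f=\mathrm{id}_X$; $X<^s G$ means $X\leqslant^d G$ holds but $G\leqslant^d X$ fails. $C(G)$ is the number of isomorphism classes of groups $X$ with $X\leqslant^d G$ and $SC(G)$ the number of isomorphism classes of groups $X$ with $X<^s G$. A group is Hopfian if every surjective endomorphism is an automorphism. *)

theory Defs
  imports "HOL-Algebra.Group" "HOL-Library.Equipollence"
begin

definition retract_of :: "('a, 'c) monoid_scheme \<Rightarrow> ('b, 'd) monoid_scheme \<Rightarrow> bool"  (infix \<open>\<le>d\<close> 50) where
  "X \<le>d G \<longleftrightarrow> (\<exists>f g. f \<in> hom X G \<and> g \<in> hom G X \<and> (\<forall>x \<in> carrier X. g (f x) = x))"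

definition strict_retract_of :: "('a, 'c) monoid_scheme \<Rightarrow> ('b, 'd) monoid_scheme \<Rightarrow> bool"  (infix \<open><s\<close> 50) where
  "X <s G \<longleftrightarrow> X \<le>d G \<and> \<not> (G \<le>d X)"

definition hopfian :: "('a, 'c) monoid_scheme \<Rightarrow> bool" where
  "hopfian G \<longleftrightarrow> (\<forall>h \<in> hom G G. h ` carrier G = carrier G \<longrightarrow> h \<in> iso G G)"

definition iso_class :: "'a monoid \<Rightarrow> 'a monoid set" where
  "iso_class X = {Y. group Y \<and> Y \<cong> X}"

text \<open>The set of isomorphism classes counted by C(G) resp. SC(G).  Every retract of G is
  isomorphic to a subgroup of G, so representatives on the element type of G suffice.\<close>
definition C_classes :: "'a monoid \<Rightarrow> 'a monoid set set" where
  "C_classes G = iso_class ` {X. group X \<and> X \<le>d G}"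

definition SC_classes :: "'a monoid \<Rightarrow> 'a monoid set set" where
  "SC_classes G = iso_class ` {X. group X \<and> X <s G}"

end

theory Submission
  imports Defs
begin

lemma iso_gives_retract:
  assumes "group A" "h \<in> iso A B"
  shows "B \<le>d A"
proof -
  have i: "inv_into (carrier A) h \<in> iso B A" using group.iso_set_sym[OF assms] .
  have "\<forall>x\<in>carrier B. h (inv_into (carrier A) h x) = x"
    using assms(2) by (auto simp: iso_iff f_inv_into_f)
  moreover have "inv_into (carrier A) h \<in> hom B A" using i by (rule iso_imp_homomorphism)
  moreover have "h \<in> hom A B" using assms(2) by (rule iso_imp_homomorphism)
  ultimately show ?thesis unfolding retract_of_def by blast
qed

lemma retract_surj:
  assumes "f \<in> hom X G" "g \<in> hom G X" "\<forall>x\<in>carrier X. g (f x) = x"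
  shows "g ` carrier G = carrier X"
proof
  show "g ` carrier G \<subseteq> carrier X" using assms(2) by (auto simp: hom_def)
  show "carrier X \<subseteq> g ` carrier G"
  proof
    fix x assume "x \<in> carrier X"
    then have "x = g (f x)" "f x \<in> carrier G" using assms by (auto simp: hom_def)
    then show "x \<in> g ` carrier G" by blast
  qed
qed

lemma mutual_retract_iso:
  assumes G: "group G" "hopfian G" and X: "group X"
    and r1: "X \<le>d G" and r2: "G \<le>d X"
  shows "X \<cong> G"
proof -
  obtain f g where f: "f \<in> hom X G" and g: "g \<in> hom G X" and fg: "\<forall>x\<in>carrier X. g (f x) = x"
    using r1 unfolding retract_of_def by blast
  obtain f' g' where f': "f' \<in> hom G X" and g': "g' \<in> hom X G" and fg': "\<forall>x\<in>carrier G. g' (f' x) = x"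
    using r2 unfolding retract_of_def by blast
  have sg: "g ` carrier G = carrier X" using retract_surj[OF f g fg] .
  have sg': "g' ` carrier X = carrier G" using retract_surj[OF f' g' fg'] .
  have h: "g' \<circ> g \<in> hom G G" using hom_compose[OF g g'] .
  have "(g' \<circ> g) ` carrier G = carrier G" using sg sg' by (metis image_comp)
  then have "g' \<circ> g \<in> iso G G" using G(2) h unfolding hopfian_def by blast
  then have "inj_on (g' \<circ> g) (carrier G)" by (simp add: iso_iff)
  then have "inj_on g (carrier G)" using inj_on_imageI2 by blast
  then have "g \<in> iso G X" using g sg by (simp add: iso_iff)
  then have "G \<cong> X" by (rule is_isoI)
  then show ?thesis using group.iso_sym[OF G(1)] by blast
qed

lemma iso_class_eq:
  assumes "group X" "X \<cong> G"
  shows "iso_class X = iso_class G"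
proof -
  have "G \<cong> X" using group.iso_sym[OF assms(1) assms(2)] .
  then show ?thesis unfolding iso_class_def using assms(2) iso_trans by blast
qed

theorem corollary3p3:
  fixes G :: "'a monoid"
  assumes "group G" and "hopfian G"
  shows "\<exists>c \<in> C_classes G. SC_classes G \<approx> C_classes G - {c}"
proof (intro bexI)
  have "G \<le>d G" using iso_gives_retract[OF assms(1) iso_set_refl] .
  then show "iso_class G \<in> C_classes G" unfolding C_classes_def using assms(1) by blast
  have "SC_classes G = C_classes G - {iso_class G}"
  proof
    show "SC_classes G \<subseteq> C_classes G - {iso_class G}"
    proof
      fix c assume "c \<in> SC_classes G"
      then obtain X where X: "group X" "X <s G" and c: "c = iso_class X"
        unfolding SC_classes_def by blast
      have "X \<le>d G" "\<not> G \<le>d X" using X(2) unfolding strict_retract_of_def by auto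
      moreover have "c \<noteq> iso_class G"
      proof
        assume "c = iso_class G"
        then have "X \<in> iso_class G" using c X(1) unfolding iso_class_def by auto
        then have "X \<cong> G" unfolding iso_class_def by auto
        then obtain h where "h \<in> iso X G" unfolding is_iso_def by blast
        then have "G \<le>d X" using iso_gives_retract[OF X(1)] by blast
        then show False using calculation by blast
      qed
      ultimately show "c \<in> C_classes G - {iso_class G}"
        unfolding C_classes_def using X(1) c by blast
    qed
    show "C_classes G - {iso_class G} \<subseteq> SC_classes G"
    proof
      fix c assume "c \<in> C_classes G - {iso_class G}"
      then obtain X where X: "group X" "X \<le>d G" and c: "c = iso_class X" and ne: "c \<noteq> iso_class G"
        unfolding C_classes_def by blast
      have "\<not> G \<le>d X"
      proof
        assume "G \<le>d X"
        then have "X \<cong> G" using mutual_retract_iso[OF assms X(1) X(2)] by blast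
        then show False using iso_class_eq[OF X(1)] c ne by blast
      qed
      then have "X <s G" using X(2) unfolding strict_retract_of_def by blast
      then show "c \<in> SC_classes G" unfolding SC_classes_def using X(1) c by blast
    qed
  qed
  then show "SC_classes G \<approx> C_classes G - {iso_class G}" by (simp add: eqpoll_refl)
qed

end
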